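(* Let $G$ and $H$ be chain graphs over the same node set $V$ such that the undirected edges of $H$ are a subset of the undirected edges of $G$ and the directed edges of $H$ are a subset of the directed edges of $G$. Then $\mathcal{N}(H)\subseteq\mathcal{N}(G)$.
   Context: A chain graph (CG) over $V=\{1,\dots,N\}$ is a graph with (at most one) undirected or directed edge between any two nodes and no directed pseudocycle (a closed route following edges $v_i - v_{i+1}$ or $v_i\to v_{i+1}$ with at least one directed edge). Its connectivity components $B_1,\dots,B_n$ are the maximal sets connected by undirected routes, ordered so directed edges go from lower to higher index; $Pa(B_i)$ is the set of parents of nodes of $B_i$. The moral graph $K^m$ of a CG $K$ joins two nodes iff they are adjacent in $K$ or both are parents of a common connectivity component of $K$. For a CG $G$, $\mathcal{N}(G)$ is the set of regular (positive definite covariance) Gaussian distributions $p$ on $\mathbb{R}^N$ with $p(x)=\prod_i p(x_{B_i}\mid x_{Pa(B_i)})$ and each marginal $p(x_{B_i\cup Pa(B_i)})$ equal to a product of non-negative functions over the complete sets of $(G_{B_i\cup Pa(B_i)})^m$, where $G_I$ is the induced subgraph on $I$. *)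

theory Defs
  imports "HOL-Analysis.Analysis"
begin

record 'n mgraph =
  nodes :: "'n set"
  und   :: "('n \<times> 'n) set"
  dir   :: "('n \<times> 'n) set"

definition wf_graph :: "'n mgraph \<Rightarrow> bool" where
  "wf_graph K \<longleftrightarrow>
     und K \<subseteq> nodes K \<times> nodes K \<and> dir K \<subseteq> nodes K \<times> nodes K \<and>
     sym (und K) \<and> (\<forall>a. (a,a) \<notin> und K \<and> (a,a) \<notin> dir K) \<and>
     (\<forall>a b. (a,b) \<in> dir K \<longrightarrow> (b,a) \<notin> dir K \<and> (a,b) \<notin> und K)"

definition has_dir_pseudocycle :: "'n mgraph \<Rightarrow> bool" where
  "has_dir_pseudocycle K \<longleftrightarrow> (\<exists>a b. (a,b) \<in> dir K \<and> (b,a) \<in> (und K \<union> dir K)\<^sup>*)"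

definition chain_graph :: "'n mgraph \<Rightarrow> bool" where
  "chain_graph K \<longleftrightarrow> wf_graph K \<and> \<not> has_dir_pseudocycle K"

definition comps :: "'n mgraph \<Rightarrow> 'n set set" where
  "comps K = {{w. (v,w) \<in> (und K)\<^sup>*} | v. v \<in> nodes K}"

definition parents :: "'n mgraph \<Rightarrow> 'n set \<Rightarrow> 'n set" where
  "parents K B = {a. \<exists>b\<in>B. (a,b) \<in> dir K}"

definition induced :: "'n mgraph \<Rightarrow> 'n set \<Rightarrow> 'n mgraph" where
  "induced K I = \<lparr>nodes = nodes K \<inter> I, und = und K \<inter> (I \<times> I), dir = dir K \<inter> (I \<times> I)\<rparr>"

definition moral_edges :: "'n mgraph \<Rightarrow> ('n \<times> 'n) set" where
  "moral_edges K = {(a,b). a \<noteq> b \<and>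
     ((a,b) \<in> und K \<or> (a,b) \<in> dir K \<or> (b,a) \<in> dir K \<or>
      (\<exists>B\<in>comps K. a \<in> parents K B \<and> b \<in> parents K B))}"

definition complete_set :: "'n set \<Rightarrow> ('n \<times> 'n) set \<Rightarrow> 'n set \<Rightarrow> bool" where
  "complete_set W E C \<longleftrightarrow> C \<subseteq> W \<and> (\<forall>a\<in>C. \<forall>b\<in>C. a \<noteq> b \<longrightarrow> (a,b) \<in> E)"

text \<open>Points are functions \<open>'n \<Rightarrow> real\<close>; densities are w.r.t. Lebesgue measure.\<close>

definition vec_of :: "('n::finite \<Rightarrow> real) \<Rightarrow> real ^ 'n" where
  "vec_of x = (\<chi> i. x i)"

definition pos_def :: "real ^ 'n ^ 'n \<Rightarrow> bool" where
  "pos_def S \<longleftrightarrow> transpose S = S \<and> (\<forall>v. v \<noteq> 0 \<longrightarrow> v \<bullet> (S *v v) > 0)"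

definition gauss_density :: "real ^ 'n \<Rightarrow> real ^ 'n ^ 'n \<Rightarrow> ('n::finite \<Rightarrow> real) \<Rightarrow> real" where
  "gauss_density \<mu> S x =
     (2 * pi) powr (- real CARD('n) / 2) / sqrt (det S) *
     exp (- (1/2) * ((vec_of x - \<mu>) \<bullet> (matrix_inv S *v (vec_of x - \<mu>))))"

definition regular_gaussian :: "(('n::finite \<Rightarrow> real) \<Rightarrow> real) \<Rightarrow> bool" where
  "regular_gaussian p \<longleftrightarrow> (\<exists>\<mu> S. pos_def S \<and> p = gauss_density \<mu> S)"

text \<open>Marginal density of \<open>x_I\<close> (as a function of \<open>x\<close>, depending only on \<open>x_I\<close>).\<close>
definition marg :: "(('n::finite \<Rightarrow> real) \<Rightarrow> real) \<Rightarrow> 'n set \<Rightarrow> ('n \<Rightarrow> real) \<Rightarrow> real" where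
  "marg p I x = (LINT y | PiM (UNIV - I) (\<lambda>_. lborel). p (merge I (UNIV - I) (x, y)))"

definition cond_density :: "(('n::finite \<Rightarrow> real) \<Rightarrow> real) \<Rightarrow> 'n set \<Rightarrow> 'n set \<Rightarrow> ('n \<Rightarrow> real) \<Rightarrow> real" where
  "cond_density p B A x = marg p (B \<union> A) x / marg p A x"

definition depends_only_on :: "'n set \<Rightarrow> (('n \<Rightarrow> real) \<Rightarrow> real) \<Rightarrow> bool" where
  "depends_only_on C f \<longleftrightarrow> (\<forall>x y. (\<forall>i\<in>C. x i = y i) \<longrightarrow> f x = f y)"

definition factorizes_over :: "'n set \<Rightarrow> ('n \<times> 'n) set \<Rightarrow> (('n \<Rightarrow> real) \<Rightarrow> real) \<Rightarrow> bool" where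
  "factorizes_over W E f \<longleftrightarrow>
     (\<exists>\<psi>. (\<forall>C. complete_set W E C \<longrightarrow> depends_only_on C (\<psi> C) \<and> (\<forall>x. \<psi> C x \<ge> 0)) \<and>
          (\<forall>x. f x = (\<Prod>C\<in>{C. complete_set W E C}. \<psi> C x)))"

definition gauss_CG_model :: "'n::finite mgraph \<Rightarrow> (('n \<Rightarrow> real) \<Rightarrow> real) set" where
  "gauss_CG_model G = {p. regular_gaussian p \<and>
     (\<forall>x. p x = (\<Prod>B\<in>comps G. cond_density p B (parents G B) x)) \<and>
     (\<forall>B\<in>comps G. factorizes_over (nodes (induced G (B \<union> parents G B)))
                    (moral_edges (induced G (B \<union> parents G B)))
                    (marg p (B \<union> parents G B)))}"

end

theory Submission
  imports Defs "HOL-Probability.Distributions"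
begin


definition ccomp :: "'n mgraph \<Rightarrow> 'n \<Rightarrow> 'n set" where
  "ccomp K v = {w. (v,w) \<in> (und K)\<^sup>*}"

lemma cg_sym: "chain_graph K \<Longrightarrow> sym (und K)"
  by (simp add: chain_graph_def wf_graph_def)

lemma und_rtr_sym: "chain_graph K \<Longrightarrow> (a,b) \<in> (und K)\<^sup>* \<Longrightarrow> (b,a) \<in> (und K)\<^sup>*"
  using cg_sym sym_rtrancl by (metis symD)

lemma comps_iff: "nodes K = UNIV \<Longrightarrow> B \<in> comps K \<longleftrightarrow> (\<exists>v. B = ccomp K v)"
  by (auto simp: comps_def ccomp_def)

lemma ccomp_self: "v \<in> ccomp K v" by (simp add: ccomp_def)

lemma ccomp_eq: "chain_graph K \<Longrightarrow> w \<in> ccomp K v \<Longrightarrow> ccomp K w = ccomp K v"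
proof -
  assume cg: "chain_graph K" and w: "w \<in> ccomp K v"
  then have vw: "(v,w) \<in> (und K)\<^sup>*" and wv: "(w,v) \<in> (und K)\<^sup>*"
    using und_rtr_sym[OF cg] by (auto simp: ccomp_def)
  show ?thesis
  proof (intro equalityI subsetI)
    fix x assume "x \<in> ccomp K w"
    then have "(w,x) \<in> (und K)\<^sup>*" by (simp add: ccomp_def)
    then show "x \<in> ccomp K v" using vw by (simp add: ccomp_def)
  next
    fix x assume "x \<in> ccomp K v"
    then have "(v,x) \<in> (und K)\<^sup>*" by (simp add: ccomp_def)
    then show "x \<in> ccomp K w" using wv by (simp add: ccomp_def)
  qed
qed

lemma ccomp_disj: "chain_graph K \<Longrightarrow> ccomp K v \<inter> ccomp K w \<noteq> {} \<Longrightarrow> ccomp K v = ccomp K w"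
proof -
  assume cg: "chain_graph K" and "ccomp K v \<inter> ccomp K w \<noteq> {}"
  then obtain u where "u \<in> ccomp K v" "u \<in> ccomp K w" by blast
  then show ?thesis using ccomp_eq[OF cg] by metis
qed

lemma no_dir_in_comp: "chain_graph K \<Longrightarrow> (a,b) \<in> dir K \<Longrightarrow> b \<notin> ccomp K a"
proof
  assume cg: "chain_graph K" and d: "(a,b) \<in> dir K" and b: "b \<in> ccomp K a"
  then have "(b,a) \<in> (und K)\<^sup>*" using und_rtr_sym by (auto simp: ccomp_def)
  then have "(b,a) \<in> (und K \<union> dir K)\<^sup>*" by (rule rtrancl_mono[THEN subsetD, rotated]) auto
  with d cg show False by (auto simp: chain_graph_def has_dir_pseudocycle_def)
qed

lemma pseudo: "chain_graph K \<Longrightarrow> (a,b) \<in> dir K \<Longrightarrow> (b,a) \<in> (und K \<union> dir K)\<^sup>* \<Longrightarrow> False"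
  by (auto simp: chain_graph_def has_dir_pseudocycle_def)

lemma und_in_R: "(a,b) \<in> (und K)\<^sup>* \<Longrightarrow> (a,b) \<in> (und K \<union> dir K)\<^sup>*"
  by (rule rtrancl_mono[THEN subsetD, rotated]) auto

lemma ccomp_path0:
  assumes "(v,w) \<in> (und K)\<^sup>*"
  shows "(v,w) \<in> (und K \<inter> ccomp K v \<times> ccomp K v)\<^sup>*"
  using assms
proof (induction rule: rtrancl_induct)
  case base then show ?case by simp
next
  case (step y z)
  then have "y \<in> ccomp K v" "z \<in> ccomp K v" unfolding ccomp_def
    by (auto intro: rtrancl_into_rtrancl)
  then have "(y,z) \<in> (und K \<inter> ccomp K v \<times> ccomp K v)" using step(2) by simp
  with step(3) show ?case by (rule rtrancl_into_rtrancl)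
qed

lemma ccomp_path:
  assumes cg: "chain_graph K" and u: "u \<in> ccomp K v" and w: "w \<in> ccomp K v"
  shows "(u,w) \<in> (und K \<inter> ccomp K v \<times> ccomp K v)\<^sup>*"
proof -
  have s: "sym (und K \<inter> ccomp K v \<times> ccomp K v)"
    using cg_sym[OF cg] by (auto simp: sym_def)
  have "(v,u) \<in> (und K \<inter> ccomp K v \<times> ccomp K v)\<^sup>*"
    using u ccomp_path0 by (auto simp: ccomp_def)
  then have 1: "(u,v) \<in> (und K \<inter> ccomp K v \<times> ccomp K v)\<^sup>*"
    using sym_rtrancl[OF s] by (auto dest: symD)
  have 2: "(v,w) \<in> (und K \<inter> ccomp K v \<times> ccomp K v)\<^sup>*"
    using w ccomp_path0 by (auto simp: ccomp_def)
  show ?thesis using 1 2 by (rule rtrancl_trans)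
qed

lemma closed_und0:
  assumes cl: "\<forall>v\<in>S. \<forall>u. (u,v) \<in> R \<union> D \<longrightarrow> u \<in> S" and sy: "sym R"
    and wz: "(w,z) \<in> R\<^sup>*" and w: "w \<in> S"
  shows "z \<in> S"
  using wz w
proof (induction rule: rtrancl_induct)
  case base then show ?case by simp
next
  case (step y z)
  have zy: "(z,y) \<in> R" using sy step(2) by (meson symD)
  then show ?case using cl step by blast
qed



definition gpos :: "(('n::finite \<Rightarrow> real) \<Rightarrow> real) \<Rightarrow> bool" where
  "gpos p \<longleftrightarrow> (\<forall>x. 0 < p x) \<and>
     (\<forall>A x. integrable (PiM (UNIV - A) (\<lambda>_. lborel)) (\<lambda>y. p (merge A (UNIV - A) (x, y))))"

lemma marg_dep: "(\<forall>i\<in>A. x i = x' i) \<Longrightarrow> marg p A x = marg p A x'"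
proof -
  assume "\<forall>i\<in>A. x i = x' i"
  then have "\<And>y. merge A (UNIV - A) (x, y) = merge A (UNIV - A) (x', y)"
    by (auto simp: merge_def)
  then show ?thesis by (simp add: marg_def)
qed

lemma marg_neg: "marg (\<lambda>x. - p x) A x = - marg p A x"
  by (simp add: marg_def)

lemma marg_UNIV: "marg p UNIV x = p x"
proof -
  have m: "merge UNIV {} (x, y) = x" for y :: "'a \<Rightarrow> real"
    by (auto simp: merge_def)
  show ?thesis
    unfolding marg_def by (simp add: PiM_empty lebesgue_integral_count_space_finite m)
qed

lemma space_pos: "emeasure (PiM J (\<lambda>_::'n::finite. lborel::real measure)) (space (PiM J (\<lambda>_. lborel))) \<noteq> 0"
proof -
  interpret product_sigma_finite "\<lambda>_::'n. lborel::real measure" by standard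
  have "space (PiM J (\<lambda>_::'n. lborel::real measure)) = PiE J (\<lambda>_. UNIV)"
    by (simp add: space_PiM)
  moreover have "emeasure (PiM J (\<lambda>_::'n. lborel::real measure)) (PiE J (\<lambda>_. UNIV)) = (\<Prod>i\<in>J. emeasure lborel (UNIV::real set))"
    by (rule emeasure_PiM) auto
  ultimately show ?thesis by simp
qed

lemma marg_pos: "gpos p \<Longrightarrow> 0 < marg p A x"
proof -
  assume gp: "gpos p"
  define f where "f y = p (merge A (UNIV - A) (x, y))" for y
  have int: "integrable (PiM (UNIV - A) (\<lambda>_. lborel)) f" using gp unfolding gpos_def f_def by blast
  have pos: "\<And>y. 0 < f y" using gp unfolding gpos_def f_def by blast
  have ge: "0 \<le> integral\<^sup>L (PiM (UNIV - A) (\<lambda>_. lborel)) f"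
    using pos by (intro integral_nonneg_AE) (auto intro: less_imp_le)
  have ne: "integral\<^sup>L (PiM (UNIV - A) (\<lambda>_. lborel)) f \<noteq> 0"
  proof
    assume "integral\<^sup>L (PiM (UNIV - A) (\<lambda>_. lborel)) f = 0"
    then have "AE y in PiM (UNIV - A) (\<lambda>_. lborel). f y = 0"
      using integral_nonneg_eq_0_iff_AE[OF int] pos by (auto intro: less_imp_le)
    then have "AE y in PiM (UNIV - A) (\<lambda>_. lborel::real measure). False"
      by (rule eventually_mono) (metis less_irrefl pos)
    then have "ae_filter (PiM (UNIV - A) (\<lambda>_. lborel::real measure)) = bot"
      using trivial_limit_def by blast
    then show False using space_pos ae_filter_eq_bot_iff by metis
  qed
  show ?thesis using ge ne unfolding marg_def f_def by simp
qed

lemma marg_fold: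
  assumes gp: "gpos p" and AD: "A \<inter> D = {}"
  shows "marg p A x = (\<integral>y. marg p (A \<union> D) (merge (UNIV - D) D (x,y)) \<partial>PiM D (\<lambda>_. lborel))"
proof -
  interpret product_sigma_finite "\<lambda>_::'a. lborel::real measure" by standard
  define E where "E = UNIV - A - D"
  have U: "UNIV - A = D \<union> E" using AD unfolding E_def by blast
  have DE: "D \<inter> E = {}" unfolding E_def by blast
  have U2: "UNIV - (A \<union> D) = E" unfolding E_def by blast
  define f where "f y = p (merge A (UNIV - A) (x, y))" for y
  have int: "integrable (PiM (D \<union> E) (\<lambda>_. lborel)) f" using gp unfolding gpos_def f_def U[symmetric] by blast
  have "marg p A x = integral\<^sup>L (PiM (D \<union> E) (\<lambda>_. lborel)) f"
    unfolding marg_def f_def U ..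
  also have "\<dots> = (\<integral>y. (\<integral>w. f (merge D E (y, w)) \<partial>PiM E (\<lambda>_. lborel)) \<partial>PiM D (\<lambda>_. lborel))"
    by (rule product_integral_fold[OF DE _ _ int]) simp_all
  also have "\<dots> = (\<integral>y. marg p (A \<union> D) (merge (UNIV - D) D (x,y)) \<partial>PiM D (\<lambda>_. lborel))"
  proof (rule Bochner_Integration.integral_cong[OF refl])
    fix y
    have "\<And>w. f (merge D E (y, w)) = p (merge (A \<union> D) E (merge (UNIV - D) D (x, y), w))"
      unfolding f_def U
      by (rule arg_cong[where f=p]) (use AD in \<open>auto simp: merge_def E_def fun_eq_iff\<close>)
    then show "(\<integral>w. f (merge D E (y, w)) \<partial>PiM E (\<lambda>_. lborel)) = marg p (A \<union> D) (merge (UNIV - D) D (x,y))"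
      unfolding marg_def U2 by simp
  qed
  finally show ?thesis .
qed



lemma pd_inv:
  fixes S :: "real^'n^'n"
  assumes "pos_def S"
  shows "invertible S" and "S ** matrix_inv S = mat 1"
proof -
  have ker: "\<forall>x. S *v x = 0 \<longrightarrow> x = 0"
  proof (intro allI impI)
    fix x assume "S *v x = 0"
    then have "\<not> (x \<bullet> (S *v x) > 0)" by simp
    then show "x = 0" using assms unfolding pos_def_def by blast
  qed
  then obtain B where "B ** S = mat 1" using matrix_left_invertible_ker by blast
  then have "S ** B = mat 1" using matrix_left_right_inverse by blast
  with \<open>B ** S = mat 1\<close> show inv: "invertible S" unfolding invertible_def by blast
  then have "\<exists>A'. S ** A' = mat 1 \<and> A' ** S = mat 1" unfolding invertible_def .
  then show "S ** matrix_inv S = mat 1" unfolding matrix_inv_def by (rule someI2_ex) blast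
qed

lemma pd_q:
  fixes S :: "real^'n^'n"
  assumes pd: "pos_def S" and v: "v \<noteq> 0"
  shows "v \<bullet> (matrix_inv S *v v) > 0"
proof -
  define w where "w = matrix_inv S *v v"
  have Sw: "S *v w = v" unfolding w_def matrix_vector_mul_assoc pd_inv(2)[OF pd] by simp
  have "w \<noteq> 0" using Sw v by auto
  then have "w \<bullet> (S *v w) > 0" using pd unfolding pos_def_def by blast
  then show ?thesis using Sw unfolding w_def by (simp add: inner_commute)
qed

lemma mv_scale: "(M::real^'n^'n) *v (c *\<^sub>R w) = c *\<^sub>R (M *v w)"
  by (simp add: vec_eq_iff matrix_vector_mult_def sum_distrib_left algebra_simps)

lemma q_lower:
  fixes S :: "real^'n^'n"
  assumes pd: "pos_def S"
  shows "\<exists>l>0. \<forall>v. l * (v \<bullet> v) \<le> v \<bullet> (matrix_inv S *v v)"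
proof -
  define Q where "Q v = v \<bullet> (matrix_inv S *v v)" for v :: "real^'n"
  have cont: "continuous_on (sphere 0 1) Q" unfolding Q_def by (intro continuous_intros)
  have ne: "sphere (0::real^'n) 1 \<noteq> {}"
  proof -
    have "axis undefined (1::real) \<in> sphere (0::real^'n) 1" by simp
    then show ?thesis by blast
  qed
  obtain u where u: "u \<in> sphere 0 1" and umin: "\<And>y. y \<in> sphere 0 1 \<Longrightarrow> Q u \<le> Q y"
    using continuous_attains_inf[OF compact_sphere ne cont] by blast
  have u0: "u \<noteq> 0" using u by auto
  have lpos: "Q u > 0" unfolding Q_def by (rule pd_q[OF pd u0])
  have "\<forall>v. Q u * (v \<bullet> v) \<le> Q v"
  proof
    fix v :: "real^'n"
    show "Q u * (v \<bullet> v) \<le> Q v"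
    proof (cases "v = 0")
      case True then show ?thesis by (simp add: Q_def)
    next
      case False
      define w where "w = (1 / norm v) *\<^sub>R v"
      have wS: "w \<in> sphere 0 1" using False unfolding w_def by simp
      have vw: "v = norm v *\<^sub>R w" using False unfolding w_def by simp
      have "Q v = (norm v)^2 * Q w"
        apply (subst vw) apply (subst (2) vw)
        using wS by (simp add: Q_def mv_scale power2_eq_square)
      moreover have "v \<bullet> v = (norm v)^2" by (simp add: power2_norm_eq_inner)
      moreover have "Q u \<le> Q w" using umin[OF wS] .
      ultimately show ?thesis by (metis mult.commute mult_right_mono zero_le_power2)
    qed
  qed
  then show ?thesis using lpos unfolding Q_def by blast
qed

lemma h_int:
  assumes l: "l > (0::real)"
  shows "integrable lborel (\<lambda>t. exp (- (l/2) * (t - m)\<^sup>2))"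
proof -
  define \<sigma> where "\<sigma> = sqrt (1/l)"
  have s2: "\<sigma>\<^sup>2 = 1/l" using l unfolding \<sigma>_def by simp
  have spos: "\<sigma> > 0" using l unfolding \<sigma>_def by simp
  have eq: "exp (- (l/2) * (t - m)\<^sup>2) = sqrt (2 * pi / l) * normal_density m \<sigma> t" for t
  proof -
    have "normal_density m \<sigma> t = 1 / sqrt (2 * pi / l) * exp (- (l/2) * (t - m)\<^sup>2)"
      unfolding normal_density_def s2 using l spos by (simp add: field_simps)
    moreover have "sqrt (2 * pi / l) > 0" using l by simp
    moreover have "\<sigma> > 0" using l unfolding \<sigma>_def by simp
    ultimately show ?thesis using l by simp
  qed
  show ?thesis unfolding eq by (intro integrable_mult_right integrable_normal_density spos)
qed

lemma e_int:
  fixes M :: "real^'n^'n" and \<mu> :: "real^'n"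
  assumes l: "l > 0" and lb: "\<forall>v. l * (v \<bullet> v) \<le> v \<bullet> (M *v v)"
  shows "integrable (PiM (UNIV - A) (\<lambda>_. lborel))
     (\<lambda>y. exp (- (1/2) * ((vec_of (merge A (UNIV - A) (x,y)) - \<mu>) \<bullet> (M *v (vec_of (merge A (UNIV - A) (x,y)) - \<mu>)))))"
    (is "integrable ?P ?g")
proof -
  interpret product_sigma_finite "\<lambda>_::'n. lborel::real measure" by standard
  define J where "J = UNIV - A"
  define h where "h i t = exp (- (l/2) * (t - \<mu>$i)\<^sup>2)" for i t
  have pint: "integrable ?P (\<lambda>y. \<Prod>i\<in>UNIV - A. h i (y i))"
  proof (rule product_integrable_prod)
    fix i show "integrable lborel (h i)" unfolding h_def by (rule h_int[OF l])
  qed simp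
  define F where "F v = exp (- (1/2) * ((v - \<mu>) \<bullet> (M *v (v - \<mu>))))" for v :: "real^'n"
  define V where "V y = vec_of (merge A (UNIV - A) (x,y))" for y
  have Feq: "F = (\<lambda>v. exp (- (1/2) * ((v - \<mu>) \<bullet> (M *v v - M *v \<mu>))))"
    by (simp add: F_def matrix_vector_mult_diff_distrib fun_eq_iff)
  have Fc: "continuous_on UNIV F" unfolding Feq by (intro continuous_intros)
  have comp: "(\<lambda>y. merge A (UNIV - A) (x,y) k) \<in> borel_measurable ?P" for k
  proof (cases "k \<in> A")
    case True
    then show ?thesis by (simp add: merge_def)
  next
    case False
    then have eq: "(\<lambda>y. merge A (UNIV - A) (x,y) k) = (\<lambda>y. y k)" by (simp add: merge_def)
    have kJ: "k \<in> UNIV - A" using False by simp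
    have "(\<lambda>y. y k) \<in> measurable ?P lborel" by (rule measurable_component_singleton[OF kJ])
    then show ?thesis unfolding eq using measurable_cong_sets[OF refl sets_lborel] by blast
  qed
  have Vm: "V \<in> borel_measurable ?P"
    unfolding borel_measurable_euclidean_space[where 'c="real^'n"]
  proof
    fix i :: "real^'n" assume "i \<in> Basis"
    then obtain k where k: "i = axis k 1" unfolding Basis_vec_def by auto
    have "(\<lambda>y. V y \<bullet> i) = (\<lambda>y. merge A (UNIV - A) (x,y) k)"
      unfolding k cart_eq_inner_axis[symmetric] V_def vec_of_def by simp
    then show "(\<lambda>y. V y \<bullet> i) \<in> borel_measurable ?P" using comp by simp
  qed
  have gm: "?g \<in> borel_measurable ?P"
    using borel_measurable_continuous_on[OF Fc Vm] unfolding F_def V_def .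
  have bound: "norm (?g y) \<le> norm (\<Prod>i\<in>UNIV - A. h i (y i))" for y
  proof -
    define d where "d = V y - \<mu>"
    have di: "\<And>i. i \<notin> A \<Longrightarrow> d $ i = y i - \<mu> $ i"
      unfolding d_def V_def vec_of_def by (simp add: merge_def)
    have "(\<Sum>i\<in>UNIV - A. (y i - \<mu>$i)\<^sup>2) = (\<Sum>i\<in>UNIV - A. d$i * d$i)"
      using di by (simp add: power2_eq_square)
    also have "\<dots> \<le> (\<Sum>i\<in>UNIV. d$i * d$i)"
      by (rule sum_mono2) simp_all
    also have "\<dots> = d \<bullet> d" by (simp add: inner_vec_def)
    finally have s1: "(\<Sum>i\<in>UNIV - A. (y i - \<mu>$i)\<^sup>2) \<le> d \<bullet> d" .
    have "l * (\<Sum>i\<in>UNIV - A. (y i - \<mu>$i)\<^sup>2) \<le> d \<bullet> (M *v d)"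
      using mult_left_mono[OF s1, of l] l lb by (meson less_imp_le order_trans)
    then have "exp (- (1/2) * (d \<bullet> (M *v d))) \<le> exp (- (l/2) * (\<Sum>i\<in>UNIV - A. (y i - \<mu>$i)\<^sup>2))"
      by simp
    also have "\<dots> = (\<Prod>i\<in>UNIV - A. h i (y i))"
      unfolding h_def by (simp add: exp_sum[symmetric] sum_distrib_left)
    finally have "exp (- (1/2) * (d \<bullet> (M *v d))) \<le> (\<Prod>i\<in>UNIV - A. h i (y i))" .
    moreover have "(\<Prod>i\<in>UNIV - A. h i (y i)) \<ge> 0" unfolding h_def by (intro prod_nonneg) simp
    ultimately show ?thesis unfolding d_def V_def by simp
  qed
  show ?thesis
    by (rule Bochner_Integration.integrable_bound[OF pint gm]) (use bound in simp)
qed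

lemma gauss_gpos:
  fixes p :: "('n::finite \<Rightarrow> real) \<Rightarrow> real"
  assumes rg: "regular_gaussian p"
  shows "gpos p \<or> gpos (\<lambda>x. - p x)"
proof -
  obtain \<mu> S where pd: "pos_def S" and pe: "p = gauss_density \<mu> S"
    using rg unfolding regular_gaussian_def by blast
  define M where "M = matrix_inv S"
  define c where "c = (2 * pi) powr (- real CARD('n) / 2) / sqrt (det S)"
  have detS: "det S \<noteq> 0" using pd_inv(1)[OF pd] invertible_det_nz by blast
  have c0: "c \<noteq> 0" unfolding c_def using detS by simp
  obtain l where l: "l > 0" and lb: "\<forall>v. l * (v \<bullet> v) \<le> v \<bullet> (M *v v)"
    using q_lower[OF pd] unfolding M_def by blast
  define e where "e x = exp (- (1/2) * ((vec_of x - \<mu>) \<bullet> (M *v (vec_of x - \<mu>))))" for x :: "'n \<Rightarrow> real"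
  have pc: "\<And>x. p x = c * e x" by (simp add: pe gauss_density_def e_def c_def M_def)
  have eint: "\<And>A x. integrable (PiM (UNIV - A) (\<lambda>_. lborel)) (\<lambda>y. e (merge A (UNIV - A) (x,y)))"
    unfolding e_def by (rule e_int[OF l lb])
  have epos: "\<And>x. e x > 0" unfolding e_def by simp
  show ?thesis
  proof (cases "c > 0")
    case True
    have "gpos p" unfolding gpos_def pc
      using True epos eint by (auto intro: integrable_mult_right)
    then show ?thesis ..
  next
    case False
    then have cn: "- c > 0" using c0 by simp
    have "gpos (\<lambda>x. - p x)" unfolding gpos_def pc
    proof (intro conjI allI)
      fix x show "0 < - (c * e x)" using cn epos[of x] by (simp add: mult_neg_pos)
    next
      fix A x
      have "integrable (PiM (UNIV - A) (\<lambda>_. lborel)) (\<lambda>y. (- c) * e (merge A (UNIV - A) (x,y)))"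
        using eint by (intro integrable_mult_right) simp
      then show "integrable (PiM (UNIV - A) (\<lambda>_. lborel)) (\<lambda>y. - (c * e (merge A (UNIV - A) (x,y))))"
        by simp
    qed
    then show ?thesis ..
  qed
qed

lemma merge_agree: "i \<notin> D \<Longrightarrow> merge (UNIV - D) D (x,y) i = x i"
  by (simp add: merge_def)

locale setting =
  fixes G H :: "'n::finite mgraph" and p :: "('n \<Rightarrow> real) \<Rightarrow> real"
  assumes cgG: "chain_graph G" and cgH: "chain_graph H"
    and nG: "nodes G = UNIV" and nH: "nodes H = UNIV"
    and uHG: "und H \<subseteq> und G" and dHG: "dir H \<subseteq> dir G"
    and gp: "gpos p"
    and prodH: "\<And>x. p x = (\<Prod>B\<in>comps H. cond_density p B (parents H B) x)"
    and facH: "\<And>B. B\<in>comps H \<Longrightarrow> factorizes_over (nodes (induced H (B \<union> parents H B)))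
                    (moral_edges (induced H (B \<union> parents H B)))
                    (marg p (B \<union> parents H B))"
begin

definition cH :: "'n set \<Rightarrow> ('n \<Rightarrow> real) \<Rightarrow> real" where
  "cH K x = marg p (K \<union> parents H K) x / marg p (parents H K) x"

definition closedH :: "'n set \<Rightarrow> bool" where
  "closedH S \<longleftrightarrow> (\<forall>v\<in>S. \<forall>u. (u,v) \<in> und H \<union> dir H \<longrightarrow> u \<in> S)"

lemma cH_dep: "(\<forall>i\<in>K \<union> parents H K. x i = x' i) \<Longrightarrow> cH K x = cH K x'"
  unfolding cH_def using marg_dep[of "K \<union> parents H K" x x' p] marg_dep[of "parents H K" x x' p]
  by auto

lemma closed_und:
  assumes cl: "closedH S" and wz: "(w,z) \<in> (und H)\<^sup>*" and w: "w \<in> S"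
  shows "z \<in> S"
  by (rule closed_und0[OF cl[unfolded closedH_def] cg_sym[OF cgH] wz w])

lemma compsH: "K \<in> comps H \<longleftrightarrow> (\<exists>v. K = ccomp H v)"
  using comps_iff[OF nH] .
lemma compsG: "B \<in> comps G \<longleftrightarrow> (\<exists>v. B = ccomp G v)"
  using comps_iff[OF nG] .

lemma compH_sub_G: "ccomp H v \<subseteq> ccomp G v"
  unfolding ccomp_def using rtrancl_mono[OF uHG] by auto

lemma anc:
  assumes "closedH S"
  shows "marg p S x = (\<Prod>K\<in>{K\<in>comps H. K \<subseteq> S}. cH K x)"
  using assms
proof (induction "card (UNIV - S)" arbitrary: S x rule: less_induct)
  case less
  show ?case
  proof (cases "S = UNIV")
    case True
    then show ?thesis using prodH[of x] by (simp add: marg_UNIV cond_density_def cH_def)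
  next
    case False
    define anc where "anc w = {u. (u,w) \<in> (und H \<union> dir H)\<^sup>*}" for w
    obtain v0 where "v0 \<notin> S" using False by auto
    then obtain v where v: "v \<notin> S" and vmin: "\<And>w. w \<notin> S \<Longrightarrow> card (anc v) \<le> card (anc w)"
      using ex_has_least_nat[of "\<lambda>w. w \<notin> S" v0 "\<lambda>w. card (anc w)"] by blast
    define K where "K = ccomp H v"
    have KH: "K \<in> comps H" using compsH K_def by auto
    have paS: "parents H K \<subseteq> S"
    proof
      fix u assume "u \<in> parents H K"
      then obtain k where k: "k \<in> K" "(u,k) \<in> dir H" by (auto simp: parents_def)
      have "(v,k) \<in> (und H)\<^sup>*" using k by (simp add: K_def ccomp_def)
      then have kv: "(k,v) \<in> (und H)\<^sup>*" by (rule und_rtr_sym[OF cgH])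
      show "u \<in> S"
      proof (rule ccontr)
        assume uS: "u \<notin> S"
        have sub: "anc u \<subseteq> anc v"
        proof
          fix t assume "t \<in> anc u"
          then have "(t,u) \<in> (und H \<union> dir H)\<^sup>*" by (simp add: anc_def)
          moreover have "(u,k) \<in> (und H \<union> dir H)\<^sup>*" by (rule r_into_rtrancl) (simp add: k(2))
          ultimately have "(t,k) \<in> (und H \<union> dir H)\<^sup>*" by (rule rtrancl_trans)
          then have "(t,v) \<in> (und H \<union> dir H)\<^sup>*" using und_in_R[OF kv] by (rule rtrancl_trans)
          then show "t \<in> anc v" unfolding anc_def by simp
        qed
        have "v \<notin> anc u"
        proof
          assume "v \<in> anc u"
          then have "(v,u) \<in> (und H \<union> dir H)\<^sup>*" by (simp add: anc_def)
          with und_in_R[OF kv] have "(k,u) \<in> (und H \<union> dir H)\<^sup>*" by (rule rtrancl_trans)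
          then show False using pseudo[OF cgH k(2)] by simp
        qed
        moreover have "v \<in> anc v" by (simp add: anc_def)
        ultimately have "anc u \<subset> anc v" using sub by blast
        then have "card (anc u) < card (anc v)" by (simp add: psubset_card_mono)
        with vmin[OF uS] show False by simp
      qed
    qed
    have KS: "K \<inter> S = {}"
    proof (rule ccontr)
      assume "K \<inter> S \<noteq> {}"
      then obtain w where w: "w \<in> K" "w \<in> S" by blast
      then have "(v,w) \<in> (und H)\<^sup>*" by (simp add: K_def ccomp_def)
      then have "(w,v) \<in> (und H)\<^sup>*" by (rule und_rtr_sym[OF cgH])
      then have "v \<in> S" by (rule closed_und[OF less.prems _ w(2)])
      with v show False by simp
    qed
    define S' where "S' = S \<union> K"
    have cl': "closedH S'"
      unfolding closedH_def
    proof (intro ballI allI impI)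
      fix z u assume z: "z \<in> S'" and e: "(u,z) \<in> und H \<union> dir H"
      show "u \<in> S'"
      proof (cases "z \<in> S")
        case True
        have "\<forall>v\<in>S. \<forall>u. (u,v) \<in> und H \<union> dir H \<longrightarrow> u \<in> S" using less.prems unfolding closedH_def .
        then have "u \<in> S" using True e by blast
        then show ?thesis by (simp add: S'_def)
      next
        case False
        then have zK: "z \<in> K" using z by (simp add: S'_def)
        show ?thesis
        proof (cases "(u,z) \<in> dir H")
          case True
          then have "u \<in> parents H K" using zK unfolding parents_def by blast
          then have "u \<in> S" using paS by blast
          then show ?thesis by (simp add: S'_def)
        next
          case False
          then have "(u,z) \<in> und H" using e by blast
          then have zu: "(z,u) \<in> und H" by (rule symD[OF cg_sym[OF cgH]])
          have vz: "(v,z) \<in> (und H)\<^sup>*" using zK by (simp add: K_def ccomp_def)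
          have "(v,u) \<in> (und H)\<^sup>*" by (rule rtrancl.rtrancl_into_rtrancl[OF vz zu])
          then have "u \<in> K" by (simp add: K_def ccomp_def)
          then show ?thesis by (simp add: S'_def)
        qed
      qed
    qed
    have vK: "v \<in> K" by (simp add: K_def ccomp_self)
    have "card (UNIV - S') < card (UNIV - S)"
      using vK v by (intro psubset_card_mono) (auto simp: S'_def)
    then have IH: "\<And>x. marg p S' x = (\<Prod>K\<in>{K\<in>comps H. K \<subseteq> S'}. cH K x)"
      using less.hyps cl' by blast
    have setK: "{K'\<in>comps H. K' \<subseteq> S'} = insert K {K'\<in>comps H. K' \<subseteq> S}"
    proof (intro equalityI subsetI)
      fix K' assume "K' \<in> {K'\<in>comps H. K' \<subseteq> S'}"
      then obtain w where K': "K' = ccomp H w" "K' \<subseteq> S'" using compsH by auto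
      show "K' \<in> insert K {K'\<in>comps H. K' \<subseteq> S}"
      proof (cases "K' \<inter> K = {}")
        case True then show ?thesis using K' compsH by (auto simp: S'_def)
      next
        case False then have "K' = K" using ccomp_disj[OF cgH] K' K_def by auto
        then show ?thesis by simp
      qed
    qed (auto simp: S'_def KH)
    have Knot: "K \<notin> {K'\<in>comps H. K' \<subseteq> S}" using vK v by auto
    let ?mg = "\<lambda>y. merge (UNIV - K) K (x,y)"
    have agree: "\<And>y i. i \<notin> K \<Longrightarrow> ?mg y i = x i" by (simp add: merge_def)
    have "marg p S x = (\<integral>y. marg p S' (?mg y) \<partial>PiM K (\<lambda>_. lborel))"
      unfolding S'_def using marg_fold[OF gp, of S K x] KS by (simp add: Int_commute)
    also have "\<dots> = (\<integral>y. (\<Prod>K'\<in>{K'\<in>comps H. K' \<subseteq> S}. cH K' x) * cH K (?mg y) \<partial>PiM K (\<lambda>_. lborel))"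
    proof (rule Bochner_Integration.integral_cong[OF refl])
      fix y
      have "(\<Prod>K'\<in>{K'\<in>comps H. K' \<subseteq> S}. cH K' (?mg y)) = (\<Prod>K'\<in>{K'\<in>comps H. K' \<subseteq> S}. cH K' x)"
      proof (rule prod.cong[OF refl])
        fix K' assume K': "K' \<in> {K'\<in>comps H. K' \<subseteq> S}"
        have clS: "\<forall>v\<in>S. \<forall>u. (u,v) \<in> und H \<union> dir H \<longrightarrow> u \<in> S" using less.prems unfolding closedH_def .
        have "parents H K' \<subseteq> S" using K' clS unfolding parents_def by blast
        then have "K' \<union> parents H K' \<subseteq> UNIV - K" using K' KS by auto
        then show "cH K' (?mg y) = cH K' x" by (intro cH_dep) (auto simp: merge_def)
      qed
      then show "marg p S' (?mg y) = (\<Prod>K'\<in>{K'\<in>comps H. K' \<subseteq> S}. cH K' x) * cH K (?mg y)"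
        using prod.insert[OF _ Knot, of "\<lambda>K'. cH K' (?mg y)"] by (simp add: IH setK mult.commute)
    qed
    also have "\<dots> = (\<Prod>K'\<in>{K'\<in>comps H. K' \<subseteq> S}. cH K' x) * (\<integral>y. cH K (?mg y) \<partial>PiM K (\<lambda>_. lborel))"
      by simp
    also have "(\<integral>y. cH K (?mg y) \<partial>PiM K (\<lambda>_. lborel)) = 1"
    proof -
      have paK: "parents H K \<inter> K = {}" using paS KS by auto
      have "\<And>y. marg p (parents H K) (?mg y) = marg p (parents H K) x"
        using paK by (intro marg_dep) (auto simp: merge_def)
      then have "(\<integral>y. cH K (?mg y) \<partial>PiM K (\<lambda>_. lborel))
          = (\<integral>y. marg p (parents H K \<union> K) (?mg y) / marg p (parents H K) x \<partial>PiM K (\<lambda>_. lborel))"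
        by (simp add: cH_def Un_commute)
      also have "\<dots> = (\<integral>y. marg p (parents H K \<union> K) (?mg y) \<partial>PiM K (\<lambda>_. lborel)) / marg p (parents H K) x"
        by simp
      also have "\<dots> = marg p (parents H K) x / marg p (parents H K) x"
        using marg_fold[OF gp paK, of x] by simp
      also have "\<dots> = 1" using marg_pos[OF gp, of "parents H K" x] by simp
      finally show ?thesis .
    qed
    finally show ?thesis by simp
  qed
qed


lemma compH_in_G: "K \<in> comps H \<Longrightarrow> \<exists>B\<in>comps G. K \<subseteq> B"
proof -
  assume "K \<in> comps H"
  then obtain v where "K = ccomp H v" using compsH by blast
  then have "K \<subseteq> ccomp G v" using compH_sub_G by simp
  moreover have "ccomp G v \<in> comps G" using compsG by blast
  ultimately show ?thesis by blast
qed

lemma comps_ne: "K \<in> comps H \<Longrightarrow> K \<noteq> {}"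
  using compsH ccomp_self by fastforce

lemma parHG: "parents H K \<subseteq> parents G K"
  using dHG unfolding parents_def by blast

lemma compG_und: "B = ccomp G b0 \<Longrightarrow> v \<in> B \<Longrightarrow> (u,v) \<in> und G \<Longrightarrow> u \<in> B"
proof -
  assume B: "B = ccomp G b0" and v: "v \<in> B" and e: "(u,v) \<in> und G"
  have vu: "(v,u) \<in> und G" by (rule symD[OF cg_sym[OF cgG] e])
  have "(b0,v) \<in> (und G)\<^sup>*" using v B by (simp add: ccomp_def)
  then have "(b0,u) \<in> (und G)\<^sup>*" by (rule rtrancl.rtrancl_into_rtrancl[OF _ vu])
  then show ?thesis using B by (simp add: ccomp_def)
qed

lemma same_comp_path: "B = ccomp G b0 \<Longrightarrow> a \<in> B \<Longrightarrow> b \<in> B \<Longrightarrow> (a,b) \<in> (und G)\<^sup>*"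
proof -
  assume B: "B = ccomp G b0" and a: "a \<in> B" and b: "b \<in> B"
  have "(b0,a) \<in> (und G)\<^sup>*" using a B by (simp add: ccomp_def)
  then have "(a,b0) \<in> (und G)\<^sup>*" by (rule und_rtr_sym[OF cgG])
  moreover have "(b0,b) \<in> (und G)\<^sup>*" using b B by (simp add: ccomp_def)
  ultimately show ?thesis by (rule rtrancl_trans)
qed

lemma paG_disj: "B = ccomp G b0 \<Longrightarrow> parents G B \<inter> B = {}"
proof (rule ccontr)
  assume B: "B = ccomp G b0" and "parents G B \<inter> B \<noteq> {}"
  then obtain a b where ab: "a \<in> B" "b \<in> B" "(a,b) \<in> dir G" unfolding parents_def by blast
  have "(b,a) \<in> (und G)\<^sup>*" by (rule same_comp_path[OF B ab(2) ab(1)])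
  then have "(b,a) \<in> (und G \<union> dir G)\<^sup>*" by (rule und_in_R)
  then show False by (rule pseudo[OF cgG ab(3)])
qed

lemma paH_disj: "K = ccomp H v \<Longrightarrow> parents H K \<inter> K = {}"
proof (rule ccontr)
  assume K: "K = ccomp H v" and "parents H K \<inter> K \<noteq> {}"
  then obtain a b where ab: "a \<in> K" "b \<in> K" "(a,b) \<in> dir H" unfolding parents_def by blast
  have "(v,a) \<in> (und H)\<^sup>*" using ab K by (simp add: ccomp_def)
  then have "(a,v) \<in> (und H)\<^sup>*" by (rule und_rtr_sym[OF cgH])
  moreover have "(v,b) \<in> (und H)\<^sup>*" using ab K by (simp add: ccomp_def)
  ultimately have "(a,b) \<in> (und H)\<^sup>*" by (rule rtrancl_trans)
  then have "(b,a) \<in> (und H)\<^sup>*" by (rule und_rtr_sym[OF cgH])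
  then have "(b,a) \<in> (und H \<union> dir H)\<^sup>*" by (rule und_in_R)
  then show False by (rule pseudo[OF cgH ab(3)])
qed

lemma R1:
  assumes BG: "B \<in> comps G"
  shows "marg p (B \<union> parents G B) x = marg p (parents G B) x * (\<Prod>K\<in>{K\<in>comps H. K \<subseteq> B}. cH K x)"
proof -
  obtain b0 where B: "B = ccomp G b0" using BG compsG by blast
  define Dn where "Dn = {w. \<exists>b\<in>B. (b,w) \<in> (und G \<union> dir G)\<^sup>*}"
  define S' where "S' = UNIV - Dn"
  have BD: "B \<subseteq> Dn" unfolding Dn_def by blast
  have paS: "parents G B \<subseteq> S'"
  proof
    fix u assume "u \<in> parents G B"
    then obtain b where b: "b \<in> B" "(u,b) \<in> dir G" unfolding parents_def by blast
    show "u \<in> S'"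
    proof (rule ccontr)
      assume "u \<notin> S'"
      then obtain b' where b': "b' \<in> B" "(b',u) \<in> (und G \<union> dir G)\<^sup>*" unfolding S'_def Dn_def by blast
      have "(b,b') \<in> (und G)\<^sup>*" by (rule same_comp_path[OF B b(1) b'(1)])
      then have "(b,b') \<in> (und G \<union> dir G)\<^sup>*" by (rule und_in_R)
      then have "(b,u) \<in> (und G \<union> dir G)\<^sup>*" using b'(2) by (rule rtrancl_trans)
      then show False by (rule pseudo[OF cgG b(2)])
    qed
  qed
  have clS': "closedH S'"
    unfolding closedH_def
  proof (intro ballI allI impI)
    fix v u assume v: "v \<in> S'" and e: "(u,v) \<in> und H \<union> dir H"
    show "u \<in> S'"
    proof (rule ccontr)
      assume "u \<notin> S'"
      then obtain b where b: "b \<in> B" "(b,u) \<in> (und G \<union> dir G)\<^sup>*" unfolding S'_def Dn_def by blast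
      have "(u,v) \<in> und G \<union> dir G" using e uHG dHG by blast
      then have "(b,v) \<in> (und G \<union> dir G)\<^sup>*" by (rule rtrancl.rtrancl_into_rtrancl[OF b(2)])
      then have "v \<in> Dn" using b(1) unfolding Dn_def by blast
      then show False using v unfolding S'_def by blast
    qed
  qed
  have clS: "closedH (S' \<union> B)"
    unfolding closedH_def
  proof (intro ballI allI impI)
    fix v u assume v: "v \<in> S' \<union> B" and e: "(u,v) \<in> und H \<union> dir H"
    show "u \<in> S' \<union> B"
    proof (cases "v \<in> S'")
      case True
      have "\<forall>v\<in>S'. \<forall>u. (u,v) \<in> und H \<union> dir H \<longrightarrow> u \<in> S'" using clS' unfolding closedH_def .
      then show ?thesis using True e by blast
    next
      case False
      then have vB: "v \<in> B" using v by blast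
      show ?thesis
      proof (cases "(u,v) \<in> dir H")
        case True
        then have "(u,v) \<in> dir G" using dHG by blast
        then have "u \<in> parents G B" using vB unfolding parents_def by blast
        then show ?thesis using paS by blast
      next
        case False
        then have "(u,v) \<in> und G" using e uHG by blast
        then have "u \<in> B" by (rule compG_und[OF B vB])
        then show ?thesis by blast
      qed
    qed
  qed
  have S'B: "S' \<inter> B = {}" using BD unfolding S'_def by blast
  have split: "{K\<in>comps H. K \<subseteq> S' \<union> B} = {K\<in>comps H. K \<subseteq> S'} \<union> {K\<in>comps H. K \<subseteq> B}"
  proof (intro equalityI subsetI)
    fix K assume K: "K \<in> {K\<in>comps H. K \<subseteq> S' \<union> B}"
    then obtain v where Kv: "K = ccomp H v" using compsH by blast
    then have KG: "K \<subseteq> ccomp G v" using compH_sub_G by simp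
    show "K \<in> {K\<in>comps H. K \<subseteq> S'} \<union> {K\<in>comps H. K \<subseteq> B}"
    proof (cases "ccomp G v \<inter> B = {}")
      case True
      then have "K \<subseteq> S'" using K KG by blast
      then show ?thesis using K by blast
    next
      case False
      then have "ccomp G v = B" using ccomp_disj[OF cgG, of v b0] B by blast
      then show ?thesis using K KG by blast
    qed
  qed blast
  have disj: "{K\<in>comps H. K \<subseteq> S'} \<inter> {K\<in>comps H. K \<subseteq> B} = {}"
    using comps_ne S'B by blast
  have mS: "\<And>x. marg p (S' \<union> B) x = marg p S' x * (\<Prod>K\<in>{K\<in>comps H. K \<subseteq> B}. cH K x)"
  proof -
    fix x
    have "marg p (S' \<union> B) x = (\<Prod>K\<in>{K\<in>comps H. K \<subseteq> S'} \<union> {K\<in>comps H. K \<subseteq> B}. cH K x)"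
      using anc[OF clS, of x] split by simp
    also have "\<dots> = (\<Prod>K\<in>{K\<in>comps H. K \<subseteq> S'}. cH K x) * (\<Prod>K\<in>{K\<in>comps H. K \<subseteq> B}. cH K x)"
      by (rule prod.union_disjoint) (use disj in auto)
    also have "\<dots> = marg p S' x * (\<Prod>K\<in>{K\<in>comps H. K \<subseteq> B}. cH K x)"
      using anc[OF clS', of x] by simp
    finally show "marg p (S' \<union> B) x = marg p S' x * (\<Prod>K\<in>{K\<in>comps H. K \<subseteq> B}. cH K x)" .
  qed
  define W where "W = B \<union> parents G B"
  define Dd where "Dd = S' - parents G B"
  have WD: "W \<inter> Dd = {}" using S'B unfolding W_def Dd_def by blast
  have WD2: "W \<union> Dd = S' \<union> B" using paS unfolding W_def Dd_def by blast
  have PD: "parents G B \<inter> Dd = {}" unfolding Dd_def by blast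
  have PD2: "parents G B \<union> Dd = S'" using paS unfolding Dd_def by blast
  let ?mg = "\<lambda>y. merge (UNIV - Dd) Dd (x,y)"
  have "marg p W x = (\<integral>y. marg p (W \<union> Dd) (?mg y) \<partial>PiM Dd (\<lambda>_. lborel))"
    by (rule marg_fold[OF gp WD])
  also have "\<dots> = (\<integral>y. marg p S' (?mg y) * (\<Prod>K\<in>{K\<in>comps H. K \<subseteq> B}. cH K x) \<partial>PiM Dd (\<lambda>_. lborel))"
  proof (rule Bochner_Integration.integral_cong[OF refl])
    fix y
    have "(\<Prod>K\<in>{K\<in>comps H. K \<subseteq> B}. cH K (?mg y)) = (\<Prod>K\<in>{K\<in>comps H. K \<subseteq> B}. cH K x)"
    proof (rule prod.cong[OF refl])
      fix K assume K: "K \<in> {K\<in>comps H. K \<subseteq> B}"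
      have "parents H K \<subseteq> parents G B" using K parHG unfolding parents_def by blast
      then have "K \<union> parents H K \<subseteq> UNIV - Dd" using K WD unfolding W_def by blast
      then show "cH K (?mg y) = cH K x" by (intro cH_dep) (auto simp: merge_def)
    qed
    then show "marg p (W \<union> Dd) (?mg y) = marg p S' (?mg y) * (\<Prod>K\<in>{K\<in>comps H. K \<subseteq> B}. cH K x)"
      unfolding WD2 mS by simp
  qed
  also have "\<dots> = (\<integral>y. marg p S' (?mg y) \<partial>PiM Dd (\<lambda>_. lborel)) * (\<Prod>K\<in>{K\<in>comps H. K \<subseteq> B}. cH K x)"
    by simp
  also have "(\<integral>y. marg p S' (?mg y) \<partial>PiM Dd (\<lambda>_. lborel)) = marg p (parents G B) x"
    using marg_fold[OF gp PD, of x] unfolding PD2 by simp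
  finally show ?thesis unfolding W_def .
qed

lemma condG: "B \<in> comps G \<Longrightarrow> cond_density p B (parents G B) x = (\<Prod>K\<in>{K\<in>comps H. K \<subseteq> B}. cH K x)"
  using R1[of B x] marg_pos[OF gp, of "parents G B" x] by (simp add: cond_density_def)

lemma prodG: "p x = (\<Prod>B\<in>comps G. cond_density p B (parents G B) x)"
proof -
  have U: "comps H = (\<Union>B\<in>comps G. {K\<in>comps H. K \<subseteq> B})"
    using compH_in_G by blast
  have D: "\<forall>B\<in>comps G. \<forall>B'\<in>comps G. B \<noteq> B' \<longrightarrow> {K\<in>comps H. K \<subseteq> B} \<inter> {K\<in>comps H. K \<subseteq> B'} = {}"
  proof (intro ballI impI)
    fix B B' assume B: "B \<in> comps G" and B': "B' \<in> comps G" and ne: "B \<noteq> B'"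
    obtain v where v: "B = ccomp G v" using B compsG by blast
    obtain w where w: "B' = ccomp G w" using B' compsG by blast
    have "B \<inter> B' = {}" using ccomp_disj[OF cgG, of v w] v w ne by blast
    then show "{K\<in>comps H. K \<subseteq> B} \<inter> {K\<in>comps H. K \<subseteq> B'} = {}" using comps_ne by blast
  qed
  have "p x = (\<Prod>K\<in>comps H. cH K x)"
    using prodH[of x] by (simp add: cond_density_def cH_def)
  also have "\<dots> = (\<Prod>K\<in>(\<Union>B\<in>comps G. {K\<in>comps H. K \<subseteq> B}). cH K x)"
    using U by simp
  also have "\<dots> = (\<Prod>B\<in>comps G. \<Prod>K\<in>{K\<in>comps H. K \<subseteq> B}. cH K x)"
    by (rule prod.UNION_disjoint) (use D in auto)
  also have "\<dots> = (\<Prod>B\<in>comps G. cond_density p B (parents G B) x)"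
    using condG by simp
  finally show ?thesis .
qed


lemma nodes_ind: "nodes (induced K I) = nodes K \<inter> I"
  by (simp add: induced_def)

lemma clique:
  assumes BG: "B \<in> comps G" and a: "a \<in> parents G B" and b: "b \<in> parents G B" and ab: "a \<noteq> b"
  shows "(a,b) \<in> moral_edges (induced G (B \<union> parents G B))"
proof -
  define W where "W = B \<union> parents G B"
  obtain v where B: "B = ccomp G v" using BG compsG by blast
  obtain b1 where b1: "b1 \<in> B" "(a,b1) \<in> dir G" using a unfolding parents_def by blast
  obtain b2 where b2: "b2 \<in> B" "(b,b2) \<in> dir G" using b unfolding parents_def by blast
  have "(b1,b2) \<in> (und G \<inter> ccomp G v \<times> ccomp G v)\<^sup>*"
    using ccomp_path[OF cgG, of b1 v b2] b1 b2 B by blast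
  moreover have "und G \<inter> ccomp G v \<times> ccomp G v \<subseteq> und (induced G W)"
    using B unfolding W_def induced_def by auto
  ultimately have p12: "(b1,b2) \<in> (und (induced G W))\<^sup>*" using rtrancl_mono by blast
  define B'' where "B'' = {w. (b1,w) \<in> (und (induced G W))\<^sup>*}"
  have "b1 \<in> nodes (induced G W)" using b1 nG unfolding W_def induced_def by simp
  then have B''c: "B'' \<in> comps (induced G W)" unfolding comps_def B''_def by blast
  have dG: "dir (induced G W) = dir G \<inter> W \<times> W" by (simp add: induced_def)
  have aW: "a \<in> W" "b \<in> W" "b1 \<in> W" "b2 \<in> W" using a b b1 b2 unfolding W_def by blast+
  have "a \<in> parents (induced G W) B''"
    unfolding parents_def B''_def dG using b1 aW by blast
  moreover have "b \<in> parents (induced G W) B''"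
    unfolding parents_def B''_def dG using b2 aW p12 by blast
  ultimately have "\<exists>B\<in>comps (induced G W). a \<in> parents (induced G W) B \<and> b \<in> parents (induced G W) B"
    using B''c by blast
  then show ?thesis using ab unfolding moral_edges_def W_def by blast
qed

lemma pa_in:
  assumes Kv: "K = ccomp H v" and e: "(a,b') \<in> dir H" and a: "a \<in> K \<union> parents H K" and b': "b' \<in> K \<union> parents H K"
  shows "a \<in> parents H K"
proof (rule ccontr)
  assume na: "a \<notin> parents H K"
  then have aK: "a \<in> K" using a by blast
  have "(v,a) \<in> (und H)\<^sup>*" using aK Kv by (simp add: ccomp_def)
  then have av: "(a,v) \<in> (und H)\<^sup>*" by (rule und_rtr_sym[OF cgH])
  show False
  proof (cases "b' \<in> K")
    case True
    have "(v,b') \<in> (und H)\<^sup>*" using True Kv by (simp add: ccomp_def)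
    with av have "(a,b') \<in> (und H)\<^sup>*" by (rule rtrancl_trans)
    then have "(b',a) \<in> (und H)\<^sup>*" by (rule und_rtr_sym[OF cgH])
    then have "(b',a) \<in> (und H \<union> dir H)\<^sup>*" by (rule und_in_R)
    then show False by (rule pseudo[OF cgH e])
  next
    case False
    then have "b' \<in> parents H K" using b' by blast
    then obtain k where k: "k \<in> K" "(b',k) \<in> dir H" unfolding parents_def by blast
    have "(v,k) \<in> (und H)\<^sup>*" using k Kv by (simp add: ccomp_def)
    then have "(k,v) \<in> (und H)\<^sup>*" by (rule und_rtr_sym[OF cgH])
    then have "(k,a) \<in> (und H)\<^sup>*" using \<open>(v,a) \<in> (und H)\<^sup>*\<close> by (rule rtrancl_trans)
    then have ka: "(k,a) \<in> (und H \<union> dir H)\<^sup>*" by (rule und_in_R)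
    have "(b',k) \<in> (und H \<union> dir H)\<^sup>*" by (rule r_into_rtrancl) (simp add: k(2))
    then have "(b',a) \<in> (und H \<union> dir H)\<^sup>*" using ka by (rule rtrancl_trans)
    then show False by (rule pseudo[OF cgH e])
  qed
qed

lemma transfer:
  assumes BG: "B \<in> comps G" and KH: "K \<in> comps H" and KB: "K \<subseteq> B"
    and C: "complete_set (nodes (induced H (K \<union> parents H K))) (moral_edges (induced H (K \<union> parents H K))) C"
  shows "complete_set (nodes (induced G (B \<union> parents G B))) (moral_edges (induced G (B \<union> parents G B))) C"
proof -
  obtain v where Kv: "K = ccomp H v" using KH compsH by blast
  have PP: "parents H K \<subseteq> parents G B" using KB dHG unfolding parents_def by blast
  have CI: "C \<subseteq> K \<union> parents H K" using C unfolding complete_set_def nodes_ind by blast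
  have sub: "C \<subseteq> nodes (induced G (B \<union> parents G B))"
    using CI PP KB nG unfolding nodes_ind by blast
  have edge: "(a,b) \<in> moral_edges (induced G (B \<union> parents G B))" if ab: "a \<in> C" "b \<in> C" "a \<noteq> b" for a b
  proof -
    let ?I = "K \<union> parents H K"
    let ?W = "B \<union> parents G B"
    have m: "(a,b) \<in> moral_edges (induced H ?I)" using C ab unfolding complete_set_def by blast
    have aW: "a \<in> ?W" "b \<in> ?W" using ab CI PP KB by blast+
    have ind: "und (induced H ?I) = und H \<inter> ?I \<times> ?I" "dir (induced H ?I) = dir H \<inter> ?I \<times> ?I"
      "und (induced G ?W) = und G \<inter> ?W \<times> ?W" "dir (induced G ?W) = dir G \<inter> ?W \<times> ?W"
      by (simp_all add: induced_def)
    have cases: "(a,b) \<in> und H \<or> (a,b) \<in> dir H \<or> (b,a) \<in> dir H \<or>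
      (\<exists>B'\<in>comps (induced H ?I). a \<in> parents (induced H ?I) B' \<and> b \<in> parents (induced H ?I) B')"
      using m unfolding moral_edges_def ind by blast
    show ?thesis
    proof (cases "(a,b) \<in> und H \<or> (a,b) \<in> dir H \<or> (b,a) \<in> dir H")
      case True
      then have "(a,b) \<in> und G \<or> (a,b) \<in> dir G \<or> (b,a) \<in> dir G" using uHG dHG by blast
      then show ?thesis using aW ab(3) unfolding moral_edges_def ind by blast
    next
      case False
      then obtain B' where "a \<in> parents (induced H ?I) B'" "b \<in> parents (induced H ?I) B'" using cases by blast
      then obtain a' b' where e: "(a,a') \<in> dir H" "a \<in> ?I" "a' \<in> ?I" "(b,b') \<in> dir H" "b \<in> ?I" "b' \<in> ?I"
        unfolding parents_def[of "induced H ?I"] ind by blast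
      have "a \<in> parents H K" by (rule pa_in[OF Kv e(1) e(2) e(3)])
      moreover have "b \<in> parents H K" by (rule pa_in[OF Kv e(4) e(5) e(6)])
      ultimately show ?thesis using clique[OF BG] PP ab(3) by blast
    qed
  qed
  show ?thesis unfolding complete_set_def using sub edge by blast
qed

lemma paH_complete:
  assumes BG: "B \<in> comps G" and KB: "K \<subseteq> B"
  shows "complete_set (nodes (induced G (B \<union> parents G B))) (moral_edges (induced G (B \<union> parents G B))) (parents H K)"
proof -
  have PP: "parents H K \<subseteq> parents G B" using KB dHG unfolding parents_def by blast
  show ?thesis unfolding complete_set_def nodes_ind nG using PP clique[OF BG] by blast
qed

lemma paG_complete:
  assumes BG: "B \<in> comps G"
  shows "complete_set (nodes (induced G (B \<union> parents G B))) (moral_edges (induced G (B \<union> parents G B))) (parents G B)"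
  unfolding complete_set_def nodes_ind nG using clique[OF BG] by blast

lemma facG:
  assumes BG: "B \<in> comps G"
  shows "factorizes_over (nodes (induced G (B \<union> parents G B))) (moral_edges (induced G (B \<union> parents G B)))
           (marg p (B \<union> parents G B))"
proof -
  define CK where "CK K = {C. complete_set (nodes (induced H (K \<union> parents H K))) (moral_edges (induced H (K \<union> parents H K))) C}" for K
  define CG where "CG = {C. complete_set (nodes (induced G (B \<union> parents G B))) (moral_edges (induced G (B \<union> parents G B))) C}"
  define KB where "KB = {K\<in>comps H. K \<subseteq> B}"
  have "\<forall>K\<in>comps H. \<exists>\<psi>. (\<forall>C. C \<in> CK K \<longrightarrow> depends_only_on C (\<psi> C) \<and> (\<forall>x. \<psi> C x \<ge> 0)) \<and>
          (\<forall>x. marg p (K \<union> parents H K) x = (\<Prod>C\<in>CK K. \<psi> C x))"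
    using facH unfolding factorizes_over_def CK_def by simp
  then obtain \<Psi> where \<Psi>: "\<And>K. K \<in> comps H \<Longrightarrow> (\<forall>C. C \<in> CK K \<longrightarrow> depends_only_on C (\<Psi> K C) \<and> (\<forall>x. \<Psi> K C x \<ge> 0)) \<and>
          (\<forall>x. marg p (K \<union> parents H K) x = (\<Prod>C\<in>CK K. \<Psi> K C x))"
    by metis
  define \<phi> where "\<phi> C x = (if C = parents G B then marg p (parents G B) x else 1) *
      (\<Prod>K\<in>KB. (if C \<in> CK K then \<Psi> K C x else 1) * (if C = parents H K then 1 / marg p (parents H K) x else 1))" for C x
  have KBH: "\<And>K. K \<in> KB \<Longrightarrow> K \<in> comps H" "\<And>K. K \<in> KB \<Longrightarrow> K \<subseteq> B" unfolding KB_def by auto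
  have CKsub: "\<And>K. K \<in> KB \<Longrightarrow> CK K \<subseteq> CG"
    using transfer[OF BG] KBH unfolding CK_def CG_def by blast
  have paHin: "\<And>K. K \<in> KB \<Longrightarrow> parents H K \<in> CG" using paH_complete[OF BG] KBH unfolding CG_def by blast
  have paGin: "parents G B \<in> CG" using paG_complete[OF BG] unfolding CG_def by blast
  have dep: "depends_only_on C (\<phi> C)" for C
    unfolding depends_only_on_def
  proof (intro allI impI)
    fix x y :: "'n \<Rightarrow> real" assume xy: "\<forall>i\<in>C. x i = y i"
    have 1: "(if C = parents G B then marg p (parents G B) x else 1) = (if C = parents G B then marg p (parents G B) y else 1)"
      using marg_dep[of "parents G B" x y p] xy by auto
    have 2: "(\<Prod>K\<in>KB. (if C \<in> CK K then \<Psi> K C x else 1) * (if C = parents H K then 1 / marg p (parents H K) x else 1))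
           = (\<Prod>K\<in>KB. (if C \<in> CK K then \<Psi> K C y else 1) * (if C = parents H K then 1 / marg p (parents H K) y else 1))"
    proof (rule prod.cong[OF refl])
      fix K assume K: "K \<in> KB"
      have a: "C \<in> CK K \<Longrightarrow> \<Psi> K C x = \<Psi> K C y" using \<Psi>[OF KBH(1)[OF K]] xy unfolding depends_only_on_def by blast
      have b: "C = parents H K \<Longrightarrow> marg p (parents H K) x = marg p (parents H K) y" using marg_dep[of "parents H K" x y p] xy by blast
      show "(if C \<in> CK K then \<Psi> K C x else 1) * (if C = parents H K then 1 / marg p (parents H K) x else 1) =
            (if C \<in> CK K then \<Psi> K C y else 1) * (if C = parents H K then 1 / marg p (parents H K) y else 1)"
      proof -
        have a': "(if C \<in> CK K then \<Psi> K C x else 1) = (if C \<in> CK K then \<Psi> K C y else 1)"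
          using a by (cases "C \<in> CK K") simp_all
        have b': "(if C = parents H K then 1 / marg p (parents H K) x else 1) = (if C = parents H K then 1 / marg p (parents H K) y else 1)"
          using b by (cases "C = parents H K") simp_all
        show ?thesis by (simp only: a' b')
      qed
    qed
    show "\<phi> C x = \<phi> C y" unfolding \<phi>_def using 1 2 by simp
  qed
  have nn: "\<phi> C x \<ge> 0" if "C \<in> CG" for C x
  proof -
    have "(if C = parents G B then marg p (parents G B) x else 1) \<ge> 0" using marg_pos[OF gp, of "parents G B" x] by simp
    moreover have "(\<Prod>K\<in>KB. (if C \<in> CK K then \<Psi> K C x else 1) * (if C = parents H K then 1 / marg p (parents H K) x else 1)) \<ge> 0"
    proof (rule prod_nonneg)
      fix K assume K: "K \<in> KB"
      have "(if C \<in> CK K then \<Psi> K C x else 1) \<ge> 0" using \<Psi>[OF KBH(1)[OF K]] by simp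
      moreover have "(if C = parents H K then 1 / marg p (parents H K) x else 1) \<ge> 0"
        using marg_pos[OF gp, of "parents H K" x] by simp
      ultimately show "(if C \<in> CK K then \<Psi> K C x else 1) * (if C = parents H K then 1 / marg p (parents H K) x else 1) \<ge> 0"
        by simp
    qed
    ultimately show ?thesis unfolding \<phi>_def by simp
  qed
  have finCG: "finite CG" by simp
  have prodeq: "marg p (B \<union> parents G B) x = (\<Prod>C\<in>CG. \<phi> C x)" for x
  proof -
    have inner: "(\<Prod>C\<in>CG. (if C \<in> CK K then \<Psi> K C x else 1) * (if C = parents H K then 1 / marg p (parents H K) x else 1))
        = cH K x" if K: "K \<in> KB" for K
    proof -
      have "(\<Prod>C\<in>CG. (if C \<in> CK K then \<Psi> K C x else 1) * (if C = parents H K then 1 / marg p (parents H K) x else 1))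
          = (\<Prod>C\<in>CG. (if C \<in> CK K then \<Psi> K C x else 1)) * (\<Prod>C\<in>CG. (if C = parents H K then 1 / marg p (parents H K) x else 1))"
        by (rule prod.distrib)
      also have "(\<Prod>C\<in>CG. (if C = parents H K then 1 / marg p (parents H K) x else 1)) = 1 / marg p (parents H K) x"
        using prod.delta[OF finCG, of "parents H K" "\<lambda>_. 1 / marg p (parents H K) x"] paHin[OF K] by simp
      also have "(\<Prod>C\<in>CG. (if C \<in> CK K then \<Psi> K C x else 1)) = (\<Prod>C\<in>{C\<in>CG. C \<in> CK K}. \<Psi> K C x)"
        using prod.inter_filter[OF finCG, of "\<lambda>C. \<Psi> K C x" "\<lambda>C. C \<in> CK K"] by simp
      also have "{C\<in>CG. C \<in> CK K} = CK K" using CKsub[OF K] by blast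
      also have "(\<Prod>C\<in>CK K. \<Psi> K C x) = marg p (K \<union> parents H K) x" using \<Psi>[OF KBH(1)[OF K]] by simp
      finally show ?thesis unfolding cH_def by simp
    qed
    have "(\<Prod>C\<in>CG. \<phi> C x) = (\<Prod>C\<in>CG. (if C = parents G B then marg p (parents G B) x else 1)) *
        (\<Prod>C\<in>CG. \<Prod>K\<in>KB. (if C \<in> CK K then \<Psi> K C x else 1) * (if C = parents H K then 1 / marg p (parents H K) x else 1))"
      unfolding \<phi>_def by (rule prod.distrib)
    also have "(\<Prod>C\<in>CG. (if C = parents G B then marg p (parents G B) x else 1)) = marg p (parents G B) x"
      using prod.delta[OF finCG, of "parents G B" "\<lambda>_. marg p (parents G B) x"] paGin by simp
    also have "(\<Prod>C\<in>CG. \<Prod>K\<in>KB. (if C \<in> CK K then \<Psi> K C x else 1) * (if C = parents H K then 1 / marg p (parents H K) x else 1))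
        = (\<Prod>K\<in>KB. \<Prod>C\<in>CG. (if C \<in> CK K then \<Psi> K C x else 1) * (if C = parents H K then 1 / marg p (parents H K) x else 1))"
      by (rule prod.swap)
    also have "\<dots> = (\<Prod>K\<in>KB. cH K x)" using inner by (rule prod.cong[OF refl])
    finally show ?thesis using R1[OF BG, of x] unfolding KB_def by simp
  qed
  show ?thesis unfolding factorizes_over_def
    using dep nn prodeq unfolding CG_def by blast
qed

end

theorem lemma3:
  fixes G H :: "'n::finite mgraph"
  assumes "chain_graph G" and "chain_graph H"
    and "nodes G = UNIV" and "nodes H = UNIV"
    and "und H \<subseteq> und G" and "dir H \<subseteq> dir G"
  shows "gauss_CG_model H \<subseteq> gauss_CG_model G"
proof
  fix p assume pH: "p \<in> gauss_CG_model H"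
  have rg: "regular_gaussian p" using pH unfolding gauss_CG_model_def by blast
  have prodH: "\<And>x. p x = (\<Prod>B\<in>comps H. cond_density p B (parents H B) x)"
    using pH unfolding gauss_CG_model_def by blast
  have facH: "\<And>B. B\<in>comps H \<Longrightarrow> factorizes_over (nodes (induced H (B \<union> parents H B)))
                    (moral_edges (induced H (B \<union> parents H B)))
                    (marg p (B \<union> parents H B))"
    using pH unfolding gauss_CG_model_def by blast
  have gp: "gpos p"
  proof -
    have "\<not> gpos (\<lambda>x. - p x)"
    proof
      assume g: "gpos (\<lambda>x. - p x)"
      define K where "K = ccomp H undefined"
      have KH: "K \<in> comps H" using comps_iff[OF assms(4)] K_def by blast
      obtain \<psi> where \<psi>: "\<forall>C. complete_set (nodes (induced H (K \<union> parents H K))) (moral_edges (induced H (K \<union> parents H K))) C \<longrightarrow>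
            depends_only_on C (\<psi> C) \<and> (\<forall>x. \<psi> C x \<ge> 0)"
        and eq: "\<forall>x. marg p (K \<union> parents H K) x = (\<Prod>C\<in>{C. complete_set (nodes (induced H (K \<union> parents H K))) (moral_edges (induced H (K \<union> parents H K))) C}. \<psi> C x)"
        using facH[OF KH] unfolding factorizes_over_def by blast
      have "(\<Prod>C\<in>{C. complete_set (nodes (induced H (K \<union> parents H K))) (moral_edges (induced H (K \<union> parents H K))) C}. \<psi> C undefined) \<ge> 0"
        using \<psi> by (intro prod_nonneg) blast
      then have "marg p (K \<union> parents H K) undefined \<ge> 0" using eq by simp
      moreover have "0 < marg (\<lambda>x. - p x) (K \<union> parents H K) undefined" by (rule marg_pos[OF g])
      ultimately show False unfolding marg_neg by simp
    qed
    then show ?thesis using gauss_gpos[OF rg] by blast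
  qed
  interpret S: setting G H p by (rule setting.intro[OF assms gp prodH facH])
  show "p \<in> gauss_CG_model G" unfolding gauss_CG_model_def using rg S.prodG S.facG by blast
qed

end
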